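(* Let $n,m\in\mathbb{N}$. If $X\subseteq\mathbb{N}$ is finite, $(\omega^{n+m}+1)$-large and $\min X\ge3$, then there exists $Y\subseteq X$ such that $Y$ is $\omega^n$-large and $\omega^m$-sparse. In particular, if $X$ is finite, $(\omega^{n+3}+1)$-large and $\min X\ge 3$, then there exists $Y\subseteq X$ which is $\omega^n$-large and exp-sparse.
   Context: Ordinals below $\omega^\omega$ are in Cantor normal form; $\omega^j\cdot m$ = sum of $m$ copies of $\omega^j$. For $m\in\mathbb{N}$: $0[m]=0$, $(\beta+1)[m]=\beta$, $(\beta+\omega^{n})[m]=\beta+\omega^{n-1}\cdot m$ for $n\ge1$. A finite $X=\{x_0<\dots<x_{\ell-1}\}\subseteq\mathbb{N}$ is $\alpha$-large if $\alpha[x_0]\cdots[x_{\ell-1}]=0$. A set $X$ is $\alpha$-sparse if for all $x<y$ in $X$ the interval $(x,y]=\{z\in\mathbb{N}:x<z\le y\}$ is $\alpha$-large. A set $X$ with $\min X\ge3$ is exp-sparse if for all $x<y$ in $X$, $4^x<y$. *)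

theory Defs
  imports Main
begin

text \<open>Ordinals below omega^omega in Cantor normal form
  omega^e1 + ... + omega^ek (e1 >= ... >= ek), represented by the list
  [e1, ..., ek] of exponents in non-increasing order; [] is 0.\<close>

type_synonym cnf = "nat list"

definition cnf_wf :: "cnf \<Rightarrow> bool" where
  "cnf_wf a \<longleftrightarrow> sorted_wrt (\<ge>) a"

definition om :: "nat \<Rightarrow> cnf" where
  "om j = [j]"

definition succ_cnf :: "cnf \<Rightarrow> cnf" where
  "succ_cnf a = a @ [0]"

text \<open>Fundamental sequence: 0[m] = 0, (b+1)[m] = b,
  (b + omega^n)[m] = b + omega^(n-1) * m for n >= 1.\<close>
definition fund :: "cnf \<Rightarrow> nat \<Rightarrow> cnf" where
  "fund a m = (if a = [] then []
     else if last a = 0 then butlast a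
     else butlast a @ replicate m (last a - 1))"

definition large :: "cnf \<Rightarrow> nat set \<Rightarrow> bool" where
  "large a X \<longleftrightarrow> foldl fund a (sorted_list_of_set X) = []"

definition sparse :: "cnf \<Rightarrow> nat set \<Rightarrow> bool" where
  "sparse a X \<longleftrightarrow> (\<forall>x\<in>X. \<forall>y\<in>X. x < y \<longrightarrow> large a {x<..y})"

definition exp_sparse :: "nat set \<Rightarrow> bool" where
  "exp_sparse X \<longleftrightarrow> (\<forall>x\<in>X. 3 \<le> x) \<and> (\<forall>x\<in>X. \<forall>y\<in>X. x < y \<longrightarrow> 4 ^ x < y)"

end

theory Submission
  imports Defs "HOL-Library.Multiset_Order"
begin

definition F :: "cnf \<Rightarrow> nat list \<Rightarrow> cnf" where "F a xs = foldl fund a xs"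

lemma F_Nil[simp]: "F a [] = a" by (simp add: F_def)
lemma F_Cons[simp]: "F a (x # xs) = F (fund a x) xs" by (simp add: F_def)
lemma F_app: "F a (xs @ ys) = F (F a xs) ys" by (simp add: F_def)

lemma fund_nil[simp]: "fund [] x = []" by (simp add: fund_def)

lemma F_nil[simp]: "F [] xs = []"
  by (induction xs) (auto simp: fund_def)

lemma F_prefix: "F a xs = [] \<Longrightarrow> F a (xs @ ys) = []"
  by (simp add: F_app)

lemma drop_take_app: "j \<le> k \<Longrightarrow> drop j (take k xs) @ drop k xs = drop j xs"
proof -
  assume jk: "j \<le> k"
  have "drop k xs = drop (k - j) (drop j xs)" using jk by simp
  then show ?thesis by (simp only: drop_take append_take_drop_id)
qed

lemma fund_app: "c \<noteq> [] \<Longrightarrow> fund (b @ c) x = b @ fund c x"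
  by (auto simp: fund_def butlast_append)

lemma F_single_nil: "F [e] [] \<noteq> []" by simp

lemma A': "F (b @ c) ys = b @ F c ys \<or>
   (\<exists>j \<le> length ys. F c (take j ys) = [] \<and> F (b @ c) ys = F b (drop j ys))"
proof (induction ys arbitrary: c)
  case Nil then show ?case by simp
next
  case (Cons y ys)
  show ?case
  proof (cases "c = []")
    case True
    then show ?thesis by (intro disjI2 exI[of _ 0]) auto
  next
    case False
    have e: "F (b @ c) (y # ys) = F (b @ fund c y) ys" using False by (simp add: fund_app)
    from Cons.IH[of "fund c y"] show ?thesis
    proof
      assume "F (b @ fund c y) ys = b @ F (fund c y) ys"
      then show ?thesis using e by simp
    next
      assume "\<exists>j\<le>length ys. F (fund c y) (take j ys) = [] \<and> F (b @ fund c y) ys = F b (drop j ys)"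
      then obtain j where "j \<le> length ys" "F (fund c y) (take j ys) = []" "F (b @ fund c y) ys = F b (drop j ys)" by blast
      then show ?thesis using e by (intro disjI2 exI[of _ "Suc j"]) auto
    qed
  qed
qed

lemma A_dest: "F (b @ c) ys = [] \<Longrightarrow> \<exists>j. F c (take j ys) = [] \<and> F b (drop j ys) = []"
proof -
  assume h: "F (b @ c) ys = []"
  from A'[of b c ys] show ?thesis
  proof
    assume "F (b @ c) ys = b @ F c ys"
    then show ?thesis using h by (intro exI[of _ "length ys"]) auto
  next
    assume "\<exists>j\<le>length ys. F c (take j ys) = [] \<and> F (b @ c) ys = F b (drop j ys)"
    then show ?thesis using h by auto
  qed
qed

lemma front_del: "F (b @ c) xs = [] \<Longrightarrow> F c xs = []"
proof -
  assume "F (b @ c) xs = []"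
  then obtain j where "F c (take j xs) = []" by (auto dest: A_dest)
  then have "F c (take j xs @ drop j xs) = []" by (rule F_prefix)
  then show ?thesis by simp
qed

definition M1 :: "cnf \<Rightarrow> bool" where
  "M1 b \<longleftrightarrow> (\<forall>x ys. sorted (x # ys) \<longrightarrow> F b ys = [] \<longrightarrow> F b (x # ys) = [])"

lemma M1D: "M1 b \<Longrightarrow> sorted (x # ys) \<Longrightarrow> F b ys = [] \<Longrightarrow> F b (x # ys) = []"
  unfolding M1_def by blast

lemma sorted_drop': "sorted xs \<Longrightarrow> sorted (drop j xs)" using sorted_wrt_drop by blast
lemma sorted_take': "sorted xs \<Longrightarrow> sorted (take j xs)" using sorted_wrt_take by blast

lemma M1_multi: "M1 b \<Longrightarrow> sorted (ws @ zs) \<Longrightarrow> F b zs = [] \<Longrightarrow> F b (ws @ zs) = []"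
proof (induction ws)
  case Nil then show ?case by simp
next
  case (Cons w ws)
  have "F b (ws @ zs) = []" using Cons by simp
  moreover have "sorted (w # (ws @ zs))" using Cons.prems(2) by simp
  ultimately show ?case using Cons.prems(1) unfolding M1_def by simp
qed

lemma A_intro_gen:
  assumes m: "M1 b" and s: "sorted xs" and h1: "F c (take k xs) = []" and h2: "F b (drop k xs) = []"
  shows "F (b @ c) xs = []"
proof -
  have xs: "F (b @ c) xs = F (F (b @ c) (take k xs)) (drop k xs)"
    by (metis F_app append_take_drop_id)
  from A'[of b c "take k xs"] show ?thesis
  proof
    assume "F (b @ c) (take k xs) = b @ F c (take k xs)"
    then have "F (b @ c) (take k xs) = b" using h1 by simp
    then show ?thesis using h2 xs by simp
  next
    assume "\<exists>j\<le>length (take k xs). F c (take j (take k xs)) = [] \<and>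
        F (b @ c) (take k xs) = F b (drop j (take k xs))"
    then obtain j where jk: "j \<le> length (take k xs)" and j: "F (b @ c) (take k xs) = F b (drop j (take k xs))" by blast
    have jk': "j \<le> k" using jk by simp
    have "sorted (drop j (take k xs) @ drop k xs)"
      using drop_take_app[OF jk', of xs] sorted_drop'[OF s, of j] by simp
    then have "F b (drop j (take k xs) @ drop k xs) = []" using M1_multi[OF m _ h2] by blast
    then show ?thesis using j xs by (simp add: F_app)
  qed
qed

lemma M1_list: "(\<forall>p \<in> set c. M1 [p]) \<Longrightarrow> M1 c"
proof (induction c rule: rev_induct)
  case Nil then show ?case by (simp add: M1_def fund_def)
next
  case (snoc p b)
  have mb: "M1 b" using snoc by auto
  have mp: "M1 [p]" using snoc by auto
  show ?case unfolding M1_def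
  proof (intro allI impI)
    fix x ys assume s: "sorted (x # ys)" and h: "F (b @ [p]) ys = []"
    then obtain j where j1: "F [p] (take j ys) = []" and j2: "F b (drop j ys) = []" using A_dest by blast
    have "sorted (x # take j ys)" using s
      by (metis sorted_take' take_Suc_Cons)
    then have "F [p] (x # take j ys) = []" by (rule M1D[OF mp _ j1])
    then have "F [p] (take (Suc j) (x # ys)) = []" by simp
    moreover have "F b (drop (Suc j) (x # ys)) = []" using j2 by simp
    ultimately show "F (b @ [p]) (x # ys) = []" by (rule A_intro_gen[OF mb s])
  qed
qed

lemma fund_rep: "fund [Suc e] x = replicate x e" by (simp add: fund_def)
lemma fund_zero: "fund [0] x = []" by (simp add: fund_def)

lemma M1_single: "M1 [e]"
proof (induction e)
  case 0 then show ?case by (simp add: M1_def fund_zero)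
next
  case (Suc e)
  show ?case unfolding M1_def
  proof (intro allI impI)
    fix x ys assume s: "sorted (x # ys)" and h: "F [Suc e] ys = []"
    then obtain y ys' where ys: "ys = y # ys'" by (cases ys) auto
    have "F (replicate y e) ys' = []" using h ys by (simp add: fund_rep)
    moreover have "M1 (replicate y e)" using Suc by (intro M1_list) auto
    ultimately have "F (replicate y e) (y # ys') = []" using s ys unfolding M1_def by auto
    moreover have "x \<le> y" using s ys by auto
    then have "replicate y e = replicate (y - x) e @ replicate x e"
      by (metis le_add_diff_inverse2 replicate_add)
    ultimately have "F (replicate x e) (y # ys') = []" by (metis front_del)
    then show "F [Suc e] (x # ys) = []" using ys by (simp add: fund_rep)
  qed
qed

lemma M1_all: "M1 c" by (intro M1_list) (auto intro: M1_single)

lemma M1_cons: "sorted (x # ys) \<Longrightarrow> F c ys = [] \<Longrightarrow> F c (x # ys) = []"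
  using M1_all unfolding M1_def by blast

lemma A_intro: "sorted xs \<Longrightarrow> F c (take k xs) = [] \<Longrightarrow> F b (drop k xs) = [] \<Longrightarrow> F (b @ c) xs = []"
  using A_intro_gen M1_all by blast

lemma M1_app: "sorted (ws @ zs) \<Longrightarrow> F b zs = [] \<Longrightarrow> F b (ws @ zs) = []"
  using M1_multi M1_all by blast

inductive dom :: "cnf \<Rightarrow> cnf \<Rightarrow> bool" where
  dnil: "dom [] []"
| ddel: "dom d c \<Longrightarrow> dom d (c @ [p])"
| dle: "dom d c \<Longrightarrow> q \<le> p \<Longrightarrow> dom (d @ [q]) (c @ [p])"

lemma ball_snoc1: "(\<forall>x\<in>set (c @ [p]). P x) \<Longrightarrow> (\<forall>x\<in>set c. P x)" by simp
lemma ball_snoc2: "(\<forall>x\<in>set (c @ [p]). P x) \<Longrightarrow> P p" by simp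

lemma DOM_gen:
  "dom d c \<Longrightarrow> (\<forall>p\<in>set c. \<forall>q xs. q \<le> p \<longrightarrow> sorted xs \<longrightarrow> F [p] xs = [] \<longrightarrow> F [q] xs = [])
   \<Longrightarrow> sorted xs \<Longrightarrow> F c xs = [] \<Longrightarrow> F d xs = []"
proof (induction arbitrary: xs rule: dom.induct)
  case dnil then show ?case by simp
next
  case (ddel d c p)
  obtain j where j2: "F c (drop j xs) = []" using A_dest[OF ddel(5)] by blast
  have H: "\<forall>p\<in>set c. \<forall>q xs. q \<le> p \<longrightarrow> sorted xs \<longrightarrow> F [p] xs = [] \<longrightarrow> F [q] xs = []"
    by (rule ball_snoc1[OF ddel(3)])
  have "F d (drop j xs) = []" using ddel.IH[OF H sorted_drop'[OF ddel(4)] j2] .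
  then have "F d (take j xs @ drop j xs) = []" by (rule M1_app[rotated]) (simp add: ddel(4))
  then show ?case by simp
next
  case (dle d c q p)
  obtain j where j1: "F [p] (take j xs) = []" and j2: "F c (drop j xs) = []" using A_dest[OF dle(6)] by blast
  have H: "\<forall>p\<in>set c. \<forall>q xs. q \<le> p \<longrightarrow> sorted xs \<longrightarrow> F [p] xs = [] \<longrightarrow> F [q] xs = []"
    by (rule ball_snoc1[OF dle(4)])
  have a2: "F d (drop j xs) = []" using dle.IH[OF H sorted_drop'[OF dle(5)] j2] .
  have Hp: "\<forall>q xs. q \<le> p \<longrightarrow> sorted xs \<longrightarrow> F [p] xs = [] \<longrightarrow> F [q] xs = []"
    by (rule ball_snoc2[OF dle(4)])
  have a1: "F [q] (take j xs) = []" using Hp[rule_format, OF \<open>q \<le> p\<close> sorted_take'[OF dle(5)] j1] .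
  show ?case by (rule A_intro[OF dle(5) a1 a2])
qed

lemma rep_snoc: "replicate (Suc k) p = replicate k p @ [p]"
  by (simp add: replicate_append_same)

lemma dom_rep: "q \<le> p \<Longrightarrow> dom (replicate k q) (replicate k p)"
proof (induction k)
  case 0 then show ?case by (simp add: dnil)
next
  case (Suc k) then show ?case by (metis rep_snoc dle)
qed

lemma EM: "\<forall>q \<le> p. \<forall>xs. sorted xs \<longrightarrow> F [p] xs = [] \<longrightarrow> F [q] xs = []"
proof (induction p)
  case 0 then show ?case by simp
next
  case (Suc p)
  show ?case
  proof (intro allI impI)
    fix q xs assume q: "q \<le> Suc p" and s: "sorted xs" and h: "F [Suc p] xs = []"
    show "F [q] xs = []"
    proof (cases "q = Suc p")
      case True then show ?thesis using h by simp
    next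
      case False
      then have q': "q \<le> p" using q by simp
      obtain x xs' where xs: "xs = x # xs'" using h by (cases xs) auto
      have h1: "F (replicate x p) xs' = []" using h xs by (simp add: fund_rep)
      have IH: "\<forall>q\<le>p. \<forall>xs. sorted xs \<longrightarrow> F [p] xs = [] \<longrightarrow> F [q] xs = []" by (rule Suc.IH)
      have "F [p] xs = []"
      proof (cases "p = 0")
        case True then show ?thesis using xs by (simp add: fund_zero)
      next
        case False
        then obtain p' where pp: "p = Suc p'" by (cases p) auto
        have H: "\<forall>pa\<in>set (replicate x p). \<forall>q xs. q \<le> pa \<longrightarrow> sorted xs \<longrightarrow> F [pa] xs = [] \<longrightarrow> F [q] xs = []"
        proof
          fix pa assume "pa \<in> set (replicate x p)"
          then have "pa = p" by simp
          then show "\<forall>q xs. q \<le> pa \<longrightarrow> sorted xs \<longrightarrow> F [pa] xs = [] \<longrightarrow> F [q] xs = []"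
            using IH by blast
        qed
        have s': "sorted xs'" using s xs by simp
        have "F (replicate x p') xs' = []"
          using DOM_gen[OF dom_rep[of p' p x] H s' h1] pp by simp
        then show ?thesis using xs pp by (simp add: fund_rep)
      qed
      then show ?thesis using IH q' s by blast
    qed
  qed
qed

lemma DOM: "dom d c \<Longrightarrow> sorted xs \<Longrightarrow> F c xs = [] \<Longrightarrow> F d xs = []"
  using DOM_gen EM by blast


lemma dom_nil: "dom [] c"
proof (induction c rule: rev_induct)
  case Nil then show ?case by (rule dnil)
next
  case (snoc x xs) then show ?case by (rule ddel)
qed

lemma dom_refl: "dom c c"
proof (induction c rule: rev_induct)
  case Nil then show ?case by (rule dnil)
next
  case (snoc x xs) then show ?case by (rule dle) simp
qed

lemma dom_app: "dom d2 c2 \<Longrightarrow> dom d1 c1 \<Longrightarrow> dom (d1 @ d2) (c1 @ c2)"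
proof (induction rule: dom.induct)
  case dnil then show ?case by simp
next
  case (ddel d c p)
  then have "dom (d1 @ d) (c1 @ c)" by simp
  then have "dom (d1 @ d) ((c1 @ c) @ [p])" by (rule dom.ddel)
  then show ?case by simp
next
  case (dle d c q p)
  then have "dom (d1 @ d) (c1 @ c)" by simp
  then have "dom ((d1 @ d) @ [q]) ((c1 @ c) @ [p])" using dle.hyps(2) by (rule dom.dle)
  then show ?case by simp
qed

lemma strict_sorted_sorted: "sorted_wrt (<) (L :: nat list) \<Longrightarrow> sorted L"
  by (induction L) auto

lemma SUB: "sorted_wrt (<) L \<Longrightarrow> sorted_wrt (<) B \<Longrightarrow> set B \<subseteq> set L \<Longrightarrow> F c B = []
  \<Longrightarrow> F c (L :: nat list) = []"
proof (induction L arbitrary: B c)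
  case Nil then show ?case by simp
next
  case (Cons l L)
  show ?case
  proof (cases B)
    case Nil then show ?thesis using Cons.prems by simp
  next
    case (Cons b B')
    show ?thesis
    proof (cases "b = l")
      case True
      have "set B' \<subseteq> set L" using Cons.prems(2,3) \<open>B = b # B'\<close> True by auto
      moreover have "F (fund c l) B' = []" using Cons.prems(4) \<open>B = b # B'\<close> True by simp
      ultimately have "F (fund c l) L = []" using Cons.IH[of B' "fund c l"] Cons.prems(1,2) \<open>B = b # B'\<close> by simp
      then show ?thesis by simp
    next
      case False
      have "b \<in> set (l # L)" using Cons.prems(3) \<open>B = b # B'\<close> by auto
      then have "l < b" using False Cons.prems(1) by auto
      then have "set B \<subseteq> set L" using Cons.prems(2,3) \<open>B = b # B'\<close> by fastforce
      then have "F c L = []" using Cons.IH[of B c] Cons.prems by simp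
      moreover have "sorted (l # L)" using Cons.prems(1) by (rule strict_sorted_sorted)
      ultimately show ?thesis by (rule M1_cons[rotated])
    qed
  qed
qed

definition pairsp :: "nat \<Rightarrow> nat list \<Rightarrow> bool" where
  "pairsp m L \<longleftrightarrow> (\<forall>u\<in>set L. \<forall>v\<in>set L. u < v \<longrightarrow> F [m] [Suc u..<Suc v] = [])"

definition Kp :: "nat \<Rightarrow> cnf \<Rightarrow> bool" where
  "Kp m t \<longleftrightarrow> (\<forall>y zs. sorted_wrt (<) (y # zs) \<longrightarrow> F (map (\<lambda>e. e + m) t) zs = [] \<longrightarrow>
     (\<exists>ys. set ys \<subseteq> set zs \<and> sorted_wrt (<) (y # ys) \<and> pairsp m (y # ys) \<and> F t (y # ys) = []))"

lemma block:
  assumes s: "sorted_wrt (<) (y # zs)" and h: "F (map (\<lambda>e. e + m) t' @ [m]) zs = []"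
    and ih: "Kp m t'"
  shows "\<exists>ys. set ys \<subseteq> set zs \<and> sorted_wrt (<) (y # ys) \<and> pairsp m (y # ys) \<and> F t' ys = []"
proof -
  obtain j where hb: "F [m] (take j zs) = []" and hr: "F (map (\<lambda>e. e + m) t') (drop j zs) = []"
    using A_dest[OF h] by blast
  have "take j zs \<noteq> []"
  proof
    assume "take j zs = []"
    then have "F [m] [] = []" using hb by (simp only:)
    then show False by simp
  qed
  then obtain B' y1 where tk: "take j zs = B' @ [y1]" by (metis rev_exhaust)
  define R where "R = drop j zs"
  have zs: "zs = B' @ [y1] @ R" using tk R_def by (metis append_assoc append_take_drop_id)
  have s2: "sorted_wrt (<) (y # B' @ [y1] @ R)" using s zs by simp
  have s1: "sorted_wrt (<) (y1 # R)" using s2 by (simp add: sorted_wrt_append)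
  have yy1: "y < y1" using s2 by simp
  have sB: "sorted_wrt (<) (B' @ [y1])" using s2 by (simp add: sorted_wrt_append)
  have inB: "\<forall>x\<in>set (B' @ [y1]). y < x \<and> x \<le> y1" using s2 by (auto simp: sorted_wrt_append)
  obtain ys' where ys1: "set ys' \<subseteq> set R" and ys2: "sorted_wrt (<) (y1 # ys')"
     and ys3: "pairsp m (y1 # ys')" and ys4: "F t' (y1 # ys') = []"
    using ih hr s1 unfolding Kp_def R_def[symmetric] by blast
  have Rg: "\<forall>x\<in>set R. y1 < x" using s1 by simp
  have blk: "F [m] [Suc y..<Suc y1] = []"
  proof (rule SUB[OF _ sB _ ])
    show "sorted_wrt (<) [Suc y..<Suc y1]" by (rule sorted_wrt_upt)
    show "set (B' @ [y1]) \<subseteq> set [Suc y..<Suc y1]" using inB by auto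
    show "F [m] (B' @ [y1]) = []" using hb tk by simp
  qed
  have P: "pairsp m (y # y1 # ys')"
    unfolding pairsp_def
  proof (intro ballI impI)
    fix u v assume u: "u \<in> set (y # y1 # ys')" and v: "v \<in> set (y # y1 # ys')" and uv: "u < v"
    have gy1: "\<forall>x\<in>set ys'. y1 < x" using ys2 by simp
    show "F [m] [Suc u..<Suc v] = []"
    proof (cases "u = y")
      case True
      then have "v = y1 \<or> v \<in> set ys'" using v uv by auto
      then show ?thesis
      proof
        assume "v = y1" then show ?thesis using blk True by simp
      next
        assume "v \<in> set ys'"
        then have "y1 < v" using gy1 by blast
        have "[Suc y..<Suc y1 + (v - y1)] = [Suc y..<Suc y1] @ [Suc y1..<Suc y1 + (v - y1)]"
          by (rule upt_add_eq_append) (use yy1 in simp)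
        moreover have "Suc y1 + (v - y1) = Suc v" using \<open>y1 < v\<close> by simp
        ultimately have eq: "[Suc y..<Suc v] = [Suc y..<Suc y1] @ [Suc y1..<Suc v]" by (simp only:)
        have "F [m] ([Suc y..<Suc y1] @ [Suc y1..<Suc v]) = []" by (rule F_prefix[OF blk])
        then show ?thesis using True eq by (simp only:)
      qed
    next
      case False
      then have u': "u \<in> set (y1 # ys')" using u by simp
      then have "y < u" using yy1 gy1 by auto
      then have "v \<in> set (y1 # ys')" using v uv by auto
      then show ?thesis using ys3 u' uv unfolding pairsp_def by blast
    qed
  qed
  show ?thesis
  proof (intro exI conjI)
    show "set (y1 # ys') \<subseteq> set zs" using ys1 zs by auto
    show "sorted_wrt (<) (y # y1 # ys')" using ys2 yy1 by auto
    show "pairsp m (y # y1 # ys')" by (rule P)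
    show "F t' (y1 # ys') = []" by (rule ys4)
  qed
qed

lemma fund_snoc0: "fund (b @ [0]) y = b" by (simp add: fund_def)
lemma fund_snocS: "fund (b @ [Suc e]) y = b @ replicate y e" by (simp add: fund_def)

lemma Kp_all: "Kp m t"
proof -
  have W: "wfp ((<) :: nat multiset \<Rightarrow> nat multiset \<Rightarrow> bool)" by (rule wfp_less_multiset) simp
  have "\<forall>t. mset t = M \<longrightarrow> Kp m t" for M
  proof (induction M rule: wfp_induct_rule[OF W])
    case (1 M)
    show ?case
    proof (intro allI impI)
      fix t assume tM: "mset t = M"
      have IH: "\<And>t'. mset t' < mset t \<Longrightarrow> Kp m t'" using 1 tM by blast
      show "Kp m t" unfolding Kp_def
      proof (intro allI impI)
        fix y zs assume s: "sorted_wrt (<) (y # zs)" and h: "F (map (\<lambda>e. e + m) t) zs = []"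
        show "\<exists>ys. set ys \<subseteq> set zs \<and> sorted_wrt (<) (y # ys) \<and> pairsp m (y # ys) \<and> F t (y # ys) = []"
        proof (cases t rule: rev_exhaust)
          case Nil
          then show ?thesis by (intro exI[of _ "[]"]) (auto simp: pairsp_def)
        next
          case (snoc b e)
          show ?thesis
          proof (cases e)
            case 0
            have h': "F (map (\<lambda>e. e + m) b @ [m]) zs = []" using h snoc 0 by simp
            have "Kp m b" using IH snoc by simp
            then obtain ys where "set ys \<subseteq> set zs" "sorted_wrt (<) (y # ys)" "pairsp m (y # ys)" "F b ys = []"
              using block[OF s h'] by blast
            then show ?thesis using snoc 0 by (intro exI[of _ ys]) (simp add: fund_snoc0)
          next
            case (Suc e')
            obtain z zs' where zs: "zs = z # zs'" using h snoc by (cases zs) auto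
            have yz: "y < z" using s zs by simp
            have s': "sorted_wrt (<) (y # zs')" using s zs by simp
            have sz': "sorted_wrt (<) zs'" using s' by simp
            have h1: "F (map (\<lambda>e. e + m) b @ replicate z (e' + m)) zs' = []"
              using h snoc Suc zs by (simp add: fund_def)
            have rz: "replicate z (e' + m) = replicate (z - Suc y) (e' + m) @ (replicate y (e' + m) @ [e' + m])"
              using yz by (metis Suc_leI le_add_diff_inverse2 replicate_add rep_snoc)
            have dm: "dom (map (\<lambda>e. e + m) b @ (replicate y (e' + m) @ [m]))
                 (map (\<lambda>e. e + m) b @ replicate z (e' + m))"
              unfolding rz
            proof (rule dom_app[OF _ dom_refl])
              have "dom (replicate y (e' + m) @ [m]) (replicate y (e' + m) @ [e' + m])"
                by (rule dle[OF dom_refl]) simp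
              then have "dom ([] @ (replicate y (e' + m) @ [m]))
                   (replicate (z - Suc y) (e' + m) @ (replicate y (e' + m) @ [e' + m]))"
                by (rule dom_app[OF _ dom_nil])
              then show "dom (replicate y (e' + m) @ [m])
                   (replicate (z - Suc y) (e' + m) @ replicate y (e' + m) @ [e' + m])" by simp
            qed
            have h2: "F (map (\<lambda>e. e + m) (b @ replicate y e') @ [m]) zs' = []"
              using DOM[OF dm strict_sorted_sorted[OF sz'] h1]
              by simp
            have "mset (b @ replicate y e') < mset t" using snoc Suc by auto
            then have "Kp m (b @ replicate y e')" by (rule IH)
            then obtain ys where "set ys \<subseteq> set zs'" "sorted_wrt (<) (y # ys)" "pairsp m (y # ys)"
                "F (b @ replicate y e') ys = []"
              using block[OF s' h2] by blast
            then show ?thesis using snoc Suc zs by (intro exI[of _ ys]) (auto simp: fund_snocS)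
          qed
        qed
      qed
    qed
  qed
  then show ?thesis by blast
qed


lemma R0: "F (replicate k 0) xs = [] \<Longrightarrow> k \<le> length xs"
proof (induction xs arbitrary: k)
  case Nil then show ?case by simp
next
  case (Cons x xs)
  show ?case
  proof (cases k)
    case 0 then show ?thesis by simp
  next
    case (Suc k')
    have "fund (replicate (Suc k') 0) x = replicate k' 0"
      by (simp only: rep_snoc fund_snoc0)
    then have "F (replicate k' 0) xs = []" using Cons.prems Suc by simp
    then show ?thesis using Cons.IH Suc by simp
  qed
qed

lemma B0: "F [1] [a..<c] = [] \<Longrightarrow> 2 * a + 1 \<le> c"
proof -
  assume h: "F [1] [a..<c] = []"
  have ac: "a < c" using h by (cases "a < c") auto
  have "[a..<c] = a # [Suc a..<c]" using ac by (simp add: upt_conv_Cons)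
  then have "F (replicate a 0) [Suc a..<c] = []" using h by (simp add: fund_def)
  then have "a \<le> c - Suc a" using R0 by fastforce
  then show ?thesis using ac by simp
qed

lemma B1: "a \<le> b \<Longrightarrow> F (replicate k 1) [a..<b] = [] \<Longrightarrow> 2 ^ k * (a + 1) \<le> b + 1"
proof (induction k arbitrary: a)
  case 0 then show ?case by simp
next
  case (Suc k)
  have "F (replicate k 1 @ [1]) [a..<b] = []" using Suc.prems(2) by (simp only: rep_snoc)
  then obtain j where j1: "F [1] (take j [a..<b]) = []" and j2: "F (replicate k 1) (drop j [a..<b]) = []"
    using A_dest by blast
  show ?case
  proof (cases "a + j \<le> b")
    case True
    have "F [1] [a..<a+j] = []" using j1 True by simp
    then have t1: "2 * a + 1 \<le> a + j" using B0 by blast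
    have "F (replicate k 1) [a+j..<b] = []" using j2 by simp
    then have "2 ^ k * (a + j + 1) \<le> b + 1" using Suc.IH True by blast
    moreover have "2 ^ Suc k * (a + 1) \<le> 2 ^ k * (a + j + 1)"
    proof -
      have "2 * (a + 1) \<le> a + j + 1" using t1 by simp
      then have "2 ^ k * (2 * (a + 1)) \<le> 2 ^ k * (a + j + 1)" by (rule mult_le_mono2)
      then show ?thesis by (simp add: mult.assoc)
    qed
    ultimately show ?thesis by linarith
  next
    case False
    have "take j [a..<b] = [a..<b]" using False by simp
    then have "2 * a + 1 \<le> b" using j1 B0 by simp
    moreover have "drop j [a..<b] = []" using False by simp
    then have "F (replicate k 1) [] = []" using j2 by metis
    then have "k = 0" by simp
    ultimately show ?thesis by simp
  qed
qed

lemma B2: "1 \<le> a \<Longrightarrow> F [2] [a..<b] = [] \<Longrightarrow> 2 ^ a < b"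
proof -
  assume a1: "1 \<le> a" and h: "F [2] [a..<b] = []"
  have ab: "a < b" using h by (cases "a < b") auto
  have "[a..<b] = a # [Suc a..<b]" using ab by (simp add: upt_conv_Cons)
  then have "F (replicate a 1) [Suc a..<b] = []" using h by (simp add: fund_def)
  then have "2 ^ a * (Suc a + 1) \<le> b + 1" using B1[of "Suc a" b a] ab by simp
  moreover have "2 ^ a * 3 \<le> 2 ^ a * (Suc a + 1)" using a1 by simp
  moreover have "(2::nat) ^ 1 \<le> 2 ^ a" using a1 by (rule power_increasing) simp
  ultimately show ?thesis by simp
qed

lemma B3: "1 \<le> x \<Longrightarrow> F [3] [Suc x..<Suc y] = [] \<Longrightarrow> 4 ^ x < y"
proof -
  assume x1: "1 \<le> x" and h: "F [3] [Suc x..<Suc y] = []"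
  have xy: "x < y" using h by (cases "x < y") auto
  have "[Suc x..<Suc y] = Suc x # [Suc (Suc x)..<Suc y]" using xy by (simp add: upt_conv_Cons)
  then have h1: "F (replicate (Suc x) 2) [Suc (Suc x)..<Suc y] = []" using h by (simp add: fund_def)
  have "replicate (Suc x) (2::nat) = replicate (x - 1) 2 @ ([2] @ [2])"
    using x1 by (metis Suc_diff_1 less_le_trans less_numeral_extra(1) rep_snoc append_assoc)
  then have "F ([2] @ [2]) [Suc (Suc x)..<Suc y] = []" using h1 front_del by metis
  then obtain j where j1: "F [2] (take j [Suc (Suc x)..<Suc y]) = []"
      and j2: "F [2] (drop j [Suc (Suc x)..<Suc y]) = []" using A_dest by blast
  have d: "F [2] [Suc (Suc x) + j..<Suc y] = []" using j2 by (simp only: drop_upt)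
  have c1: "Suc (Suc x) + j < Suc y"
  proof (rule ccontr)
    assume "\<not> Suc (Suc x) + j < Suc y"
    then have "[Suc (Suc x) + j..<Suc y] = []" by simp
    then show False using d by simp
  qed
  have e0: "F [2] [Suc (Suc x)..<Suc (Suc x) + j] = []" using j1 c1 by (simp only: take_upt less_imp_le)
  have e1: "2 ^ Suc (Suc x) < Suc (Suc x) + j" by (rule B2[OF _ e0]) simp
  have e2: "2 ^ (Suc (Suc x) + j) < Suc y" by (rule B2[OF _ d]) simp
  have "x < 2 ^ x" by (rule less_exp)
  then have "2 * x < 2 * 2 ^ x" by simp
  moreover have "2 * 2 ^ x \<le> (2::nat) ^ Suc (Suc x)" by simp
  ultimately have "2 * x < 2 ^ Suc (Suc x)" by linarith
  then have "2 * x < Suc (Suc x) + j" using e1 by linarith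
  then have "(2::nat) ^ (2 * x) < 2 ^ (Suc (Suc x) + j)" by (rule power_strict_increasing) simp
  moreover have "(4::nat) ^ x = 2 ^ (2 * x)" by (simp add: power_mult)
  ultimately show ?thesis using e2 by linarith
qed

lemma large_F: "large a X \<longleftrightarrow> F a (sorted_list_of_set X) = []"
  by (simp add: large_def F_def)

lemma interval_list: "sorted_list_of_set {u<..v} = [Suc u..<Suc v]"
proof -
  have "{u<..v} = {Suc u..<Suc v}" by auto
  then show ?thesis by simp
qed

lemma sl_strict: "sorted_wrt (<) L \<Longrightarrow> sorted_list_of_set (set L) = (L :: nat list)"
proof -
  assume a: "sorted_wrt (<) L"
  then show ?thesis
    by (simp add: sorted_list_of_set_sort_remdups distinct_remdups_id sorted_sort_id strict_sorted_iff)
qed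

lemma part1:
  assumes fX: "finite X" and lX: "large (succ_cnf (om (n + m))) X"
  shows "\<exists>Y. Y \<subseteq> X \<and> large (om n) Y \<and> sparse (om m) Y"
proof -
  define xs where "xs = sorted_list_of_set X"
  have h: "F [n + m, 0] xs = []" using lX by (simp add: large_F xs_def succ_cnf_def om_def)
  obtain x0 rest where xs: "xs = x0 # rest" using h by (cases xs) auto
  have "sorted_wrt (<) xs" unfolding xs_def by simp
  then have sx: "sorted_wrt (<) (x0 # rest)" using xs by simp
  have "set xs = X" unfolding xs_def using fX by simp
  then have setx: "set (x0 # rest) = X" using xs by simp
  have hr: "F (map (\<lambda>e. e + m) [n]) rest = []" using h xs by (simp add: fund_def)
  obtain ys where ys1: "set ys \<subseteq> set rest" and ys2: "sorted_wrt (<) (x0 # ys)"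
    and ys3: "pairsp m (x0 # ys)" and ys4: "F [n] (x0 # ys) = []"
    using Kp_all[of m "[n]"] sx hr unfolding Kp_def by blast
  have sl: "sorted_list_of_set (set (x0 # ys)) = x0 # ys" using ys2
    by (rule sl_strict)
  show ?thesis
  proof (intro exI conjI)
    show "set (x0 # ys) \<subseteq> X" using ys1 setx by auto
    show "large (om n) (set (x0 # ys))" unfolding large_F sl om_def by (rule ys4)
    show "sparse (om m) (set (x0 # ys))"
      unfolding sparse_def large_F interval_list om_def using ys3 unfolding pairsp_def by blast
  qed
qed

theorem lemma2p1:
  fixes n m :: nat
  shows "(\<forall>X :: nat set. finite X \<and> large (succ_cnf (om (n + m))) X \<and> (\<forall>x\<in>X. 3 \<le> x)
            \<longrightarrow> (\<exists>Y. Y \<subseteq> X \<and> large (om n) Y \<and> sparse (om m) Y))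
       \<and> (\<forall>X :: nat set. finite X \<and> large (succ_cnf (om (n + 3))) X \<and> (\<forall>x\<in>X. 3 \<le> x)
            \<longrightarrow> (\<exists>Y. Y \<subseteq> X \<and> large (om n) Y \<and> exp_sparse Y))"
proof (intro conjI allI impI)
  fix X :: "nat set" assume "finite X \<and> large (succ_cnf (om (n + m))) X \<and> (\<forall>x\<in>X. 3 \<le> x)"
  then show "\<exists>Y. Y \<subseteq> X \<and> large (om n) Y \<and> sparse (om m) Y" using part1[of X n m] by blast
next
  fix X :: "nat set" assume a: "finite X \<and> large (succ_cnf (om (n + 3))) X \<and> (\<forall>x\<in>X. 3 \<le> x)"
  then obtain Y where Y: "Y \<subseteq> X" "large (om n) Y" "sparse (om 3) Y" using part1[of X n 3] by blast
  have "exp_sparse Y" unfolding exp_sparse_def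
  proof (intro conjI ballI impI)
    fix x assume "x \<in> Y" then show "3 \<le> x" using Y a by blast
  next
    fix x y assume x: "x \<in> Y" and y: "y \<in> Y" and xy: "x < y"
    have "F [3] [Suc x..<Suc y] = []" using Y(3) x y xy
      unfolding sparse_def large_F interval_list om_def by blast
    moreover have "3 \<le> x" using x Y a by blast
    then have "1 \<le> x" by simp
    ultimately show "4 ^ x < y" using B3 by blast
  qed
  then show "\<exists>Y. Y \<subseteq> X \<and> large (om n) Y \<and> exp_sparse Y" using Y by blast
qed

end
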